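(* Let $\mu_1<\mu_2$ and $\sigma>0$ be real numbers, put $\theta^*=\frac{\mu_1+\mu_2}{2}$ and $x=\frac{\mu_2-\mu_1}{2\sigma}>0$. For $\theta\in\mathbb{R}$ let $\Delta=\theta-\theta^*$, and let $\pi_+(\theta)=\frac{e^{\Delta(\mu_2-\mu_1)/\sigma^2}}{1+e^{\Delta(\mu_2-\mu_1)/\sigma^2}}$ and $\pi_-(\theta)=1-\pi_+(\theta)$. Let $Q_\theta$ be the law of $X$ where $P(Y=+1)=\pi_+(\theta)$, $P(Y=-1)=\pi_-(\theta)$, $X\mid Y=+1\sim\mathcal N(\mu_1,\sigma^2)$ and $X\mid Y=-1\sim\mathcal N(\mu_2,\sigma^2)$. (Thus $\theta$ is exactly the Bayes-optimal decision threshold $\theta^*+\frac{\sigma^2}{\mu_2-\mu_1}\log\frac{\pi_+(\theta)}{\pi_-(\theta)}$ for $Q_\theta$.) Define $$\hat\mu_L(\theta)=\mathbb E_{Q_\theta}[X\mid X<\theta],\qquad \hat\mu_R(\theta)=\mathbb E_{Q_\theta}[X\mid X>\theta],\qquad g(\theta)=\frac{\hat\mu_L(\theta)+\hat\mu_R(\theta)}{2}.$$ Then $g(\theta^* )=\theta^*$, $g$ is differentiable at $\theta^*$, and $$g'(\theta^* )=C(x):=\bigl(2\varphi(x)+2x\Phi(x)\bigr)\bigl(2\varphi(x)-2x\Phi(-x)\bigr)=4\Bigl(\varphi(x)^2+\varphi(x)\,x\,(2\Phi(x)-1)-x^2\Phi(x)(1-\Phi(x))\Bigr),$$ which satisfies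 $0<C(x)\le \frac{2}{\pi}<1$ for all $x\ge 0$, with maximum value $\frac{2}{\pi}$ attained at $x=0$. Consequently, for every $c\in(2/\pi,1)$ there is $\delta>0$ such that $|\theta-\theta^*|<\delta$ implies $|g(\theta)-\theta^*|\le c\,|\theta-\theta^*|$; i.e. the iteration $\hat\theta_{t+1}=g(\hat\theta_t)$ converges linearly to $\theta^*$ once $\hat\theta_t$ is sufficiently close to $\theta^*$, with asymptotic rate at most $2/\pi$.
   Context: $\Phi$ denotes the standard normal cumulative distribution function and $\varphi(u)=\frac{1}{\sqrt{2\pi}}e^{-u^2/2}$ its density. The map $g$ models one step of balanced sampling with pseudo-labels: given the current decision boundary $\hat\theta_t$ (which is biased by the label imbalance $\pi_+/\pi_-$ of the current sample), the data are split by $\hat\theta_t$ into two pseudo-classes, the mean of each pseudo-class is estimated, and the new boundary $\hat\theta_{t+1}$ is the midpoint of these two estimated means. The paper phrases the result as: if $|\hat\theta_T-\theta^*|\ll|\mu_2-\mu_1|$ and $|(\hat\theta_T-\theta^* )(\mu_2-\mu_1)|\ll\sigma^2$, then $|\hat\theta_{t+1}-\theta^*|\le C|\hat\theta_t-\theta^*|$ for $t\ge T$ with $C=2/\pi$, understood to first order in $\hat\theta_t-\theta^*$. *)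

theory Defs
  imports "HOL-Probability.Probability"
begin

definition phi :: "real \<Rightarrow> real" where
  "phi u = std_normal_density u"

definition Phi :: "real \<Rightarrow> real" where
  "Phi u = measure (density lborel (\<lambda>t. ennreal (std_normal_density t))) {..u}"

definition theta_star :: "real \<Rightarrow> real \<Rightarrow> real" where
  "theta_star mu1 mu2 = (mu1 + mu2) / 2"

definition pi_plus :: "real \<Rightarrow> real \<Rightarrow> real \<Rightarrow> real \<Rightarrow> real" where
  "pi_plus mu1 mu2 sg theta =
     (let e = exp ((theta - theta_star mu1 mu2) * (mu2 - mu1) / sg\<^sup>2) in e / (1 + e))"

definition pi_minus :: "real \<Rightarrow> real \<Rightarrow> real \<Rightarrow> real \<Rightarrow> real" where
  "pi_minus mu1 mu2 sg theta = 1 - pi_plus mu1 mu2 sg theta"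

definition Q :: "real \<Rightarrow> real \<Rightarrow> real \<Rightarrow> real \<Rightarrow> real measure" where
  "Q mu1 mu2 sg theta = density lborel (\<lambda>t. ennreal
      (pi_plus mu1 mu2 sg theta * normal_density mu1 sg t
       + pi_minus mu1 mu2 sg theta * normal_density mu2 sg t))"

definition muL :: "real \<Rightarrow> real \<Rightarrow> real \<Rightarrow> real \<Rightarrow> real" where
  "muL mu1 mu2 sg theta =
     (set_lebesgue_integral (Q mu1 mu2 sg theta) {..<theta} (\<lambda>t. t))
       / measure (Q mu1 mu2 sg theta) {..<theta}"

definition muR :: "real \<Rightarrow> real \<Rightarrow> real \<Rightarrow> real \<Rightarrow> real" where
  "muR mu1 mu2 sg theta =
     (set_lebesgue_integral (Q mu1 mu2 sg theta) {theta<..} (\<lambda>t. t))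
       / measure (Q mu1 mu2 sg theta) {theta<..}"

definition g :: "real \<Rightarrow> real \<Rightarrow> real \<Rightarrow> real \<Rightarrow> real" where
  "g mu1 mu2 sg theta = (muL mu1 mu2 sg theta + muR mu1 mu2 sg theta) / 2"

definition C :: "real \<Rightarrow> real" where
  "C x = (2 * phi x + 2 * x * Phi x) * (2 * phi x - 2 * x * Phi (-x))"

end

theory Submission
  imports Defs
begin


lemma G_deriv:
  fixes f :: "real \<Rightarrow> real"
  assumes cont: "continuous_on UNIV f" and int: "integrable lborel f"
  shows "((\<lambda>y. \<integral>t. indicator {..y} t * f t \<partial>lborel) has_real_derivative f x) (at x)"
proof -
  define a where "a = x - 1"
  define b where "b = x + 1"
  define K where "K = (\<integral>t. indicator {..<a} t * f t \<partial>lborel)"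
  have intI: "integrable lborel (\<lambda>t. indicator A t * f t)" if "A \<in> sets borel" for A
    using integrable_mult_indicator[OF _ int, of A] that by simp
  have eq: "(\<integral>t. indicator {..u} t * f t \<partial>lborel) = K + integral {a..u} f" if "u \<in> {a<..<b}" for u
  proof -
    have "(\<lambda>t. indicator {..u} t * f t) = (\<lambda>t. indicator {..<a} t * f t + indicator {a..u} t * f t)"
      using that by (auto simp: fun_eq_iff split: split_indicator)
    hence "(\<integral>t. indicator {..u} t * f t \<partial>lborel) = K + (\<integral>t. indicator {a..u} t * f t \<partial>lborel)"
      unfolding K_def by (simp add: Bochner_Integration.integral_add intI)
    also have "(\<integral>t. indicator {a..u} t * f t \<partial>lborel) = integral {a..u} f"
    proof -
      have si: "set_integrable lborel {a..u} f"
        unfolding set_integrable_def using intI[of "{a..u}"] by simp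
      show ?thesis using set_borel_integral_eq_integral(2)[OF si] by (simp add: set_lebesgue_integral_def)
    qed
    finally show ?thesis .
  qed
  have d: "((\<lambda>u. K + integral {a..u} f) has_real_derivative f x) (at x within {a..b})"
    using integral_has_real_derivative[of a b f x] cont
    by (auto intro!: derivative_eq_intros continuous_on_subset simp: a_def b_def)
  have "interior {a..b} = {a<..<b}" by simp
  hence "x \<in> interior {a..b}" by (simp add: a_def b_def)
  hence d2: "((\<lambda>u. K + integral {a..u} f) has_real_derivative f x) (at x)"
    using d at_within_interior by metis
  show ?thesis
    by (rule has_field_derivative_transform_within_open[OF d2, of "{a<..<b}"])
       (auto simp: a_def b_def eq)
qed



lemma G_eq:
  fixes f F :: "real \<Rightarrow> real"
  assumes cont: "continuous_on UNIV f" and int: "integrable lborel f"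
    and F: "\<And>x. (F has_real_derivative f x) (at x)"
    and lim: "(F \<longlongrightarrow> (\<integral>t. f t \<partial>lborel)) at_top"
  shows "(\<integral>t. indicator {..y} t * f t \<partial>lborel) = F y"
proof -
  define G where "G = (\<lambda>y. \<integral>t. indicator {..y} t * f t \<partial>lborel)"
  have dH: "((\<lambda>y. F y - G y) has_real_derivative 0) (at x)" for x
    using DERIV_diff[OF F G_deriv[OF cont int, of x]] unfolding G_def by simp
  have const: "F y - G y = F z - G z" for z
    using DERIV_isconst_all[of "\<lambda>y. F y - G y" y z] dH by blast
  have Glim: "(G \<longlongrightarrow> (\<integral>t. f t \<partial>lborel)) at_top"
    using tendsto_integral_at_top[OF sets_lborel int] unfolding G_def by simp
  have lim2: "((\<lambda>z. F z - G z) \<longlongrightarrow> (\<integral>t. f t \<partial>lborel) - (\<integral>t. f t \<partial>lborel)) at_top"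
    by (intro tendsto_diff lim Glim)
  have eqf: "(\<lambda>z. F z - G z) = (\<lambda>z::real. F y - G y)" using const by (simp add: fun_eq_iff) metis
  have "((\<lambda>z::real. F y - G y) \<longlongrightarrow> (\<integral>t. f t \<partial>lborel) - (\<integral>t. f t \<partial>lborel)) at_top" using lim2 by (simp only: eqf)
  hence "F y - G y = (\<integral>t. f t \<partial>lborel) - (\<integral>t. f t \<partial>lborel)" by (rule tendsto_unique[OF trivial_limit_at_top_linorder tendsto_const])
  hence "F y - G y = 0" by simp
  thus ?thesis unfolding G_def by simp
qed

lemma int_lessThan:
  fixes f :: "real \<Rightarrow> real"
  assumes "f \<in> borel_measurable borel"
  shows "(\<integral>t. indicator {..<y} t * f t \<partial>lborel) = (\<integral>t. indicator {..y} t * f t \<partial>lborel)"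
proof (rule integral_cong_AE)
  show "AE t in lborel. indicator {..<y} t * f t = indicator {..y} t * f t"
    using AE_lborel_singleton[of y] by eventually_elim (auto split: split_indicator)
qed (use assms in auto)

lemma int_greaterThan:
  fixes f :: "real \<Rightarrow> real"
  assumes int: "integrable lborel f"
  shows "(\<integral>t. indicator {y<..} t * f t \<partial>lborel) = (\<integral>t. f t \<partial>lborel) - (\<integral>t. indicator {..y} t * f t \<partial>lborel)"
proof -
  have i1: "integrable lborel (\<lambda>t. indicator {..y} t * f t)"
    using integrable_mult_indicator[OF _ int, of "{..y}"] by simp
  have i2: "integrable lborel (\<lambda>t. indicator {y<..} t * f t)"
    using integrable_mult_indicator[OF _ int, of "{y<..}"] by simp
  have e: "\<And>t. f t = indicator {..y} t * f t + indicator {y<..} t * f t"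
    by (simp split: split_indicator)
  have "(\<integral>t. f t \<partial>lborel) = (\<integral>t. indicator {..y} t * f t + indicator {y<..} t * f t \<partial>lborel)"
    by (subst e) (rule refl)
  also have "\<dots> = (\<integral>t. indicator {..y} t * f t \<partial>lborel) + (\<integral>t. indicator {y<..} t * f t \<partial>lborel)"
    by (rule Bochner_Integration.integral_add[OF i1 i2])
  finally show ?thesis by simp
qed

lemma meas_dens:
  fixes h :: "real \<Rightarrow> real"
  assumes hm: "h \<in> borel_measurable borel" and hn: "\<And>t. 0 \<le> h t" and hi: "integrable lborel h"
    and A: "A \<in> sets borel"
  shows "measure (density lborel (\<lambda>t. ennreal (h t))) A = (\<integral>t. indicator A t * h t \<partial>lborel)"
proof -
  have intI: "integrable lborel (\<lambda>t. indicator A t * h t)"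
    using integrable_mult_indicator[OF _ hi, of A] A by simp
  have "emeasure (density lborel (\<lambda>t. ennreal (h t))) A = (\<integral>\<^sup>+t. ennreal (h t) * indicator A t \<partial>lborel)"
    using A hm by (subst emeasure_density) auto
  also have "\<dots> = (\<integral>\<^sup>+t. ennreal (indicator A t * h t) \<partial>lborel)"
    by (intro nn_integral_cong) (auto split: split_indicator)
  also have "\<dots> = ennreal (\<integral>t. indicator A t * h t \<partial>lborel)"
    using intI hn by (intro nn_integral_eq_integral) auto
  finally show ?thesis
    using hn by (simp add: measure_def integral_nonneg_AE)
qed

lemma set_int_dens:
  fixes h :: "real \<Rightarrow> real"
  assumes hm: "h \<in> borel_measurable borel" and hn: "\<And>t. 0 \<le> h t"
    and A: "A \<in> sets borel"
  shows "set_lebesgue_integral (density lborel (\<lambda>t. ennreal (h t))) A (\<lambda>t. t)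
     = (\<integral>t. indicator A t * (t * h t) \<partial>lborel)"
  unfolding set_lebesgue_integral_def
  using A hm hn by (subst integral_density) (auto simp: mult_ac)

lemma phi_tendsto: "(std_normal_density \<longlongrightarrow> 0) at_top"
proof -
  have "((\<lambda>z::real. exp (- (z\<^sup>2 / 2))) \<longlongrightarrow> 0) at_top"
  proof -
    have "filterlim (\<lambda>z::real. z ^ 2) at_top at_top"
      by (intro filterlim_pow_at_top filterlim_ident) auto
    hence "filterlim (\<lambda>z::real. (1/2) * z ^ 2) at_top at_top"
      by (intro filterlim_tendsto_pos_mult_at_top[OF tendsto_const]) auto
    hence "filterlim (\<lambda>z::real. z\<^sup>2 / 2) at_top at_top" by simp
    thus ?thesis
      by (intro filterlim_compose[OF exp_at_bot] filterlim_compose[OF filterlim_uminus_at_bot_at_top])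
  qed
  hence "((\<lambda>z::real. (1 / sqrt (2 * pi)) * exp (- (z\<^sup>2 / 2))) \<longlongrightarrow> (1 / sqrt (2 * pi)) * 0) at_top"
    by (intro tendsto_mult tendsto_const)
  moreover have "std_normal_density = (\<lambda>z::real. (1 / sqrt (2 * pi)) * exp (- (z\<^sup>2 / 2)))"
    by (rule ext) (simp add: std_normal_density_def)
  ultimately show ?thesis by simp
qed

lemma lin_at_top:
  assumes "(sg::real) > 0" shows "filterlim (\<lambda>y. (y - m) / sg) at_top at_top"
proof -
  have "filterlim (\<lambda>y::real. (- m) + y) at_top at_top"
    by (rule filterlim_tendsto_add_at_top[OF tendsto_const filterlim_ident])
  hence "filterlim (\<lambda>y::real. (1/sg) * ((- m) + y)) at_top at_top"
    using assms by (intro filterlim_tendsto_pos_mult_at_top[OF tendsto_const]) auto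
  thus ?thesis by (simp add: field_simps)
qed



lemma int_snd: "integrable lborel std_normal_density"
  by (rule integrable_normal_density) simp

lemma integral_snd: "(\<integral>t. std_normal_density t \<partial>lborel) = 1"
  by (rule integral_normal_density) simp


lemma tendsto_integral_at_bot0:
  fixes f :: "real \<Rightarrow> real"
  assumes f: "integrable lborel f"
  shows "((\<lambda>y. \<integral>t. indicator {..y} t * f t \<partial>lborel) \<longlongrightarrow> 0) at_bot"
proof (rule tendsto_at_botI_sequentially)
  fix X :: "nat \<Rightarrow> real" assume X: "filterlim X at_bot sequentially"
  have fm[measurable]: "f \<in> borel_measurable borel" using borel_measurable_integrable[OF f] by simp
  have m: "(\<lambda>t. indicator {..X i} t * f t) \<in> borel_measurable borel" for i by measurable
  have i: "integrable lborel (\<lambda>x. \<bar>f x\<bar>)" using integrable_abs[OF f] by simp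
  have l: "AE x in lborel. (\<lambda>i. indicator {..X i} x * f x) \<longlonglongrightarrow> 0"
  proof
    fix x
    from X have "eventually (\<lambda>n. X n \<le> x - 1) sequentially"
      unfolding filterlim_at_bot_lt[where c=x] by auto
    hence "eventually (\<lambda>n. X n < x) sequentially"
      by (rule eventually_mono) auto
    then show "(\<lambda>n. indicator {..X n} x * f x) \<longlonglongrightarrow> 0"
      by (intro tendsto_eventually) (auto elim!: eventually_mono split: split_indicator)
  qed
  have b: "AE x in lborel. \<bar>indicator {..X i} x * f x\<bar> \<le> \<bar>f x\<bar>" for i
    by (auto split: split_indicator)
  show "(\<lambda>n. \<integral>t. indicator {..X n} t * f t \<partial>lborel) \<longlonglongrightarrow> 0"
    using integral_dominated_convergence[where w="\<lambda>x. norm (f x)" and s="\<lambda>n t. indicator {..X n} t * f t" and f="\<lambda>t. 0" and M=lborel]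
    using m i l b by simp
qed

lemma snd_cont: "s \<noteq> 0 \<Longrightarrow> continuous_on UNIV (normal_density m s)"
  unfolding normal_density_def by (intro continuous_intros) auto

lemma Phi_int: "Phi u = (\<integral>t. indicator {..u} t * std_normal_density t \<partial>lborel)"
  unfolding Phi_def by (rule meas_dens) auto

lemma Phi_deriv: "(Phi has_real_derivative phi x) (at x)"
proof -
  have "Phi = (\<lambda>u. \<integral>t. indicator {..u} t * std_normal_density t \<partial>lborel)"
    using Phi_int by auto
  thus ?thesis unfolding phi_def using G_deriv[OF snd_cont[of 1] int_snd] by simp
qed

lemma Phi_top: "(Phi \<longlongrightarrow> 1) at_top"
proof -
  have "Phi = (\<lambda>u. \<integral>t. indicator {..u} t * std_normal_density t \<partial>lborel)"
    using Phi_int by auto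
  thus ?thesis using tendsto_integral_at_top[OF sets_lborel int_snd]
    integral_snd by simp
qed

lemma Phi_bot: "(Phi \<longlongrightarrow> 0) at_bot"
proof -
  have "Phi = (\<lambda>u. \<integral>t. indicator {..u} t * std_normal_density t \<partial>lborel)"
    using Phi_int by auto
  thus ?thesis using tendsto_integral_at_bot0[OF int_snd] by simp
qed

lemma phi_even: "phi (- x) = phi x"
  by (simp add: phi_def std_normal_density_def)

lemma phi_deriv: "(phi has_real_derivative (- x * phi x)) (at x)"
proof -
  have e: "phi = (\<lambda>z. (1 / sqrt (2 * pi)) * exp (- z\<^sup>2 / 2))"
    by (rule ext) (simp add: phi_def std_normal_density_def)
  show ?thesis unfolding e
    by (auto intro!: derivative_eq_intros simp: field_simps power2_eq_square)
qed

lemma Phi_neg: "Phi (- u) = 1 - Phi u"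
proof -
  define H where "H = (\<lambda>u. Phi u + Phi (- u))"
  have dH: "(H has_real_derivative 0) (at x)" for x
  proof -
    have "(H has_real_derivative (phi x + phi (-x) * (-1))) (at x)"
      unfolding H_def by (rule DERIV_add[OF Phi_deriv DERIV_chain2[OF Phi_deriv DERIV_minus[OF DERIV_ident]]])
    thus ?thesis by (simp add: phi_even)
  qed
  have c: "H z = H u" for z using DERIV_isconst_all[of H z u] dH by blast
  have "(H \<longlongrightarrow> 1 + 0) at_top"
    unfolding H_def
    by (intro tendsto_add Phi_top filterlim_compose[OF Phi_bot filterlim_uminus_at_bot_at_top])
  moreover have "H = (\<lambda>z::real. H u)" using c by auto
  ultimately have "((\<lambda>z::real. H u) \<longlongrightarrow> 1) at_top" by simp
  hence "H u = 1" by (rule tendsto_unique[OF trivial_limit_at_top_linorder tendsto_const])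
  thus ?thesis unfolding H_def by simp
qed

lemma Phi_0: "Phi 0 = 1/2"
  using Phi_neg[of 0] by simp

lemma nd_eq: "s > 0 \<Longrightarrow> normal_density m s t = phi ((t - m) / s) / s"
  unfolding normal_density_def phi_def
  by (simp add: real_sqrt_mult power_divide field_simps)

lemma N0:
  assumes s: "s > 0"
  shows "(\<integral>t. indicator {..y} t * normal_density m s t \<partial>lborel) = Phi ((y - m) / s)"
proof (rule G_eq[OF snd_cont integrable_normal_density[OF s]])
  show "s \<noteq> 0" using s by simp
  show "((\<lambda>y. Phi ((y - m) / s)) has_real_derivative normal_density m s x) (at x)" for x
  proof -
    have "((\<lambda>y. Phi ((y - m) / s)) has_real_derivative phi ((x - m) / s) * (1 / s)) (at x)"
      by (intro DERIV_chain2[OF Phi_deriv] derivative_eq_intros) (use s in auto)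
    thus ?thesis using nd_eq[OF s] by simp
  qed
  show "((\<lambda>y. Phi ((y - m) / s)) \<longlongrightarrow> (\<integral>t. normal_density m s t \<partial>lborel)) at_top"
    using filterlim_compose[OF Phi_top lin_at_top[OF s]] integral_normal_density[OF s] by simp
qed

lemma N1:
  assumes s: "s > 0"
  shows "(\<integral>t. indicator {..y} t * (t * normal_density m s t) \<partial>lborel)
     = m * Phi ((y - m) / s) - s * phi ((y - m) / s)"
proof (rule G_eq[where F = "\<lambda>y. m * Phi ((y - m) / s) - s * phi ((y - m) / s)"])
  show "continuous_on UNIV (\<lambda>t. t * normal_density m s t)"
    by (intro continuous_intros continuous_on_mult snd_cont) (use s in auto)
  show "integrable lborel (\<lambda>t. t * normal_density m s t)"
    using integrable_normal_moment_nz_1[OF s, of m] by (simp add: mult.commute)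
  show "((\<lambda>y. m * Phi ((y - m) / s) - s * phi ((y - m) / s)) has_real_derivative x * normal_density m s x) (at x)" for x
  proof -
    have lin: "((\<lambda>y. (y - m) / s) has_real_derivative 1 / s) (at x)"
      using s by (auto intro!: derivative_eq_intros)
    have "((\<lambda>y. m * Phi ((y - m) / s) - s * phi ((y - m) / s)) has_real_derivative
        m * (phi ((x - m) / s) * (1 / s)) - s * ((- ((x - m) / s) * phi ((x - m) / s)) * (1 / s))) (at x)"
      by (rule DERIV_diff[OF DERIV_cmult[OF DERIV_chain2[OF Phi_deriv lin]] DERIV_cmult[OF DERIV_chain2[OF phi_deriv lin]]])
    moreover have "m * (phi ((x - m) / s) * (1 / s)) - s * ((- ((x - m) / s) * phi ((x - m) / s)) * (1 / s))
       = x * normal_density m s x"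
      using s by (simp add: nd_eq[OF s] field_simps)
    ultimately show ?thesis by simp
  qed
  have "((\<lambda>y. m * Phi ((y - m) / s) - s * phi ((y - m) / s)) \<longlongrightarrow> m * 1 - s * 0) at_top"
    by (intro tendsto_intros filterlim_compose[OF Phi_top lin_at_top[OF s]]
        filterlim_compose[OF phi_tendsto[folded phi_def[abs_def]] lin_at_top[OF s]])
  moreover have "(\<integral>t. t * normal_density m s t \<partial>lborel) = m"
    using integral_normal_moment_nz_1[OF s, of m] by (simp add: mult.commute)
  ultimately show "((\<lambda>y. m * Phi ((y - m) / s) - s * phi ((y - m) / s)) \<longlongrightarrow> (\<integral>t. t * normal_density m s t \<partial>lborel)) at_top"
    by simp
qed



lemma pi_plus_bounds: "0 < pi_plus m1 m2 s th" "pi_plus m1 m2 s th < 1"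
  unfolding pi_plus_def Let_def
  by (auto simp: divide_simps add_pos_pos)

lemma mix_facts:
  fixes p m1 m2 s th :: real
  assumes p: "0 \<le> p" "p \<le> 1" and s: "s > 0"
  defines "h \<equiv> (\<lambda>t. p * normal_density m1 s t + (1 - p) * normal_density m2 s t)"
  defines "z1 \<equiv> (th - m1) / s" and "z2 \<equiv> (th - m2) / s"
  shows "measure (density lborel (\<lambda>t. ennreal (h t))) {..<th} = p * Phi z1 + (1 - p) * Phi z2"
    and "measure (density lborel (\<lambda>t. ennreal (h t))) {th<..} = 1 - (p * Phi z1 + (1 - p) * Phi z2)"
    and "set_lebesgue_integral (density lborel (\<lambda>t. ennreal (h t))) {..<th} (\<lambda>t. t)
          = p * (m1 * Phi z1 - s * phi z1) + (1 - p) * (m2 * Phi z2 - s * phi z2)"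
    and "set_lebesgue_integral (density lborel (\<lambda>t. ennreal (h t))) {th<..} (\<lambda>t. t)
          = (p * m1 + (1 - p) * m2) - (p * (m1 * Phi z1 - s * phi z1) + (1 - p) * (m2 * Phi z2 - s * phi z2))"
proof -
  have hm[measurable]: "h \<in> borel_measurable borel" unfolding h_def by measurable
  have hn: "\<And>t. 0 \<le> h t" unfolding h_def using p by (auto intro!: add_nonneg_nonneg mult_nonneg_nonneg)
  have i1: "integrable lborel (normal_density m s)" for m using integrable_normal_density[OF s] .
  have hi: "integrable lborel h" unfolding h_def by (intro Bochner_Integration.integrable_add integrable_mult_right i1)
  have j1: "integrable lborel (\<lambda>t. t * normal_density m s t)" for m
    using integrable_normal_moment_nz_1[OF s, of m] by (simp add: mult.commute)
  have th_int: "integrable lborel (\<lambda>t. t * h t)"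
  proof -
    have "(\<lambda>t. t * h t) = (\<lambda>t. p * (t * normal_density m1 s t) + (1 - p) * (t * normal_density m2 s t))"
      by (auto simp: h_def algebra_simps)
    thus ?thesis by (simp add: Bochner_Integration.integrable_add integrable_mult_right j1)
  qed
  have indI: "integrable lborel (\<lambda>t. indicator A t * f t)" if "integrable lborel f" "A \<in> sets borel" for f :: "real \<Rightarrow> real" and A
    using integrable_mult_indicator[OF _ that(1), of A] that(2) by simp
  have Lh: "(\<integral>t. indicator {..th} t * h t \<partial>lborel) = p * Phi z1 + (1 - p) * Phi z2"
  proof -
    have "(\<lambda>t. indicator {..th} t * h t) = (\<lambda>t. p * (indicator {..th} t * normal_density m1 s t) + (1 - p) * (indicator {..th} t * normal_density m2 s t))"
      by (auto simp: h_def algebra_simps)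
    hence "(\<integral>t. indicator {..th} t * h t \<partial>lborel) = p * (\<integral>t. indicator {..th} t * normal_density m1 s t \<partial>lborel) + (1 - p) * (\<integral>t. indicator {..th} t * normal_density m2 s t \<partial>lborel)"
      by (simp add: Bochner_Integration.integral_add integrable_mult_right indI i1)
    thus ?thesis by (simp add: N0[OF s] z1_def z2_def)
  qed
  have Lth: "(\<integral>t. indicator {..th} t * (t * h t) \<partial>lborel) = p * (m1 * Phi z1 - s * phi z1) + (1 - p) * (m2 * Phi z2 - s * phi z2)"
  proof -
    have "(\<lambda>t. indicator {..th} t * (t * h t)) = (\<lambda>t. p * (indicator {..th} t * (t * normal_density m1 s t)) + (1 - p) * (indicator {..th} t * (t * normal_density m2 s t)))"
      by (auto simp: h_def algebra_simps)
    hence "(\<integral>t. indicator {..th} t * (t * h t) \<partial>lborel) = p * (\<integral>t. indicator {..th} t * (t * normal_density m1 s t) \<partial>lborel) + (1 - p) * (\<integral>t. indicator {..th} t * (t * normal_density m2 s t) \<partial>lborel)"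
      by (simp add: Bochner_Integration.integral_add integrable_mult_right indI j1)
    thus ?thesis by (simp add: N1[OF s] z1_def z2_def)
  qed
  have Th: "(\<integral>t. h t \<partial>lborel) = 1"
    unfolding h_def by (simp add: Bochner_Integration.integral_add integrable_mult_right i1 integral_normal_density[OF s])
  have Tth: "(\<integral>t. t * h t \<partial>lborel) = p * m1 + (1 - p) * m2"
  proof -
    have "(\<lambda>t. t * h t) = (\<lambda>t. p * (t * normal_density m1 s t) + (1 - p) * (t * normal_density m2 s t))"
      by (auto simp: h_def algebra_simps)
    moreover have "(\<integral>t. t * normal_density m s t \<partial>lborel) = m" for m
      using integral_normal_moment_nz_1[OF s, of m] by (simp add: mult.commute)
    ultimately show ?thesis by (simp add: Bochner_Integration.integral_add integrable_mult_right j1)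
  qed
  have tm: "(\<lambda>t. t * h t) \<in> borel_measurable borel" by measurable
  show "measure (density lborel (\<lambda>t. ennreal (h t))) {..<th} = p * Phi z1 + (1 - p) * Phi z2"
    by (simp add: meas_dens[OF hm hn hi] int_lessThan[OF hm] Lh)
  show "measure (density lborel (\<lambda>t. ennreal (h t))) {th<..} = 1 - (p * Phi z1 + (1 - p) * Phi z2)"
    by (simp add: meas_dens[OF hm hn hi] int_greaterThan[OF hi] Lh Th)
  show "set_lebesgue_integral (density lborel (\<lambda>t. ennreal (h t))) {..<th} (\<lambda>t. t)
          = p * (m1 * Phi z1 - s * phi z1) + (1 - p) * (m2 * Phi z2 - s * phi z2)"
    by (simp add: set_int_dens[OF hm hn] int_lessThan[OF tm] Lth)
  show "set_lebesgue_integral (density lborel (\<lambda>t. ennreal (h t))) {th<..} (\<lambda>t. t)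
          = (p * m1 + (1 - p) * m2) - (p * (m1 * Phi z1 - s * phi z1) + (1 - p) * (m2 * Phi z2 - s * phi z2))"
    by (simp add: set_int_dens[OF hm hn] int_greaterThan[OF th_int] Lth Tth)
qed

definition MLf :: "real \<Rightarrow> real \<Rightarrow> real \<Rightarrow> real \<Rightarrow> real" where
  "MLf m1 m2 s th = pi_plus m1 m2 s th * Phi ((th - m1) / s) + (1 - pi_plus m1 m2 s th) * Phi ((th - m2) / s)"
definition ILf :: "real \<Rightarrow> real \<Rightarrow> real \<Rightarrow> real \<Rightarrow> real" where
  "ILf m1 m2 s th = pi_plus m1 m2 s th * (m1 * Phi ((th - m1) / s) - s * phi ((th - m1) / s))
     + (1 - pi_plus m1 m2 s th) * (m2 * Phi ((th - m2) / s) - s * phi ((th - m2) / s))"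
definition EEf :: "real \<Rightarrow> real \<Rightarrow> real \<Rightarrow> real \<Rightarrow> real" where
  "EEf m1 m2 s th = pi_plus m1 m2 s th * m1 + (1 - pi_plus m1 m2 s th) * m2"

lemma g_closed:
  assumes s: "s > 0"
  shows "g m1 m2 s th = (ILf m1 m2 s th / MLf m1 m2 s th
     + (EEf m1 m2 s th - ILf m1 m2 s th) / (1 - MLf m1 m2 s th)) / 2"
proof -
  let ?p = "pi_plus m1 m2 s th"
  have p: "0 \<le> ?p" "?p \<le> 1" using pi_plus_bounds[of m1 m2 s th] by auto
  have Qe: "Q m1 m2 s th = density lborel (\<lambda>t. ennreal (?p * normal_density m1 s t + (1 - ?p) * normal_density m2 s t))"
    unfolding Q_def pi_minus_def ..
  show ?thesis
    unfolding g_def muL_def muR_def Qe mix_facts[OF p s] MLf_def ILf_def EEf_def ..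
qed



lemma Phi_deriv_eq[derivative_intros]:
  "(f has_real_derivative f') (at x) \<Longrightarrow> ((\<lambda>x. Phi (f x)) has_real_derivative phi (f x) * f') (at x)"
  by (rule DERIV_chain2[OF Phi_deriv])

lemma phi_deriv_eq[derivative_intros]:
  "(f has_real_derivative f') (at x) \<Longrightarrow> ((\<lambda>x. phi (f x)) has_real_derivative (- f x * phi (f x)) * f') (at x)"
  by (rule DERIV_chain2[OF phi_deriv])

lemma deriv_at_ts:
  fixes m1 m2 s :: real
  assumes lt: "m1 < m2" and s: "s > 0"
  defines "ts \<equiv> theta_star m1 m2" and "x \<equiv> (m2 - m1) / (2 * s)"
  shows "(g m1 m2 s has_real_derivative C x) (at ts)" and "g m1 m2 s ts = ts"
proof -
  define a where "a = x / (2 * s)"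
  have m2: "m2 = m1 + 2 * s * x" using s unfolding x_def by (simp add: field_simps)
  have tsv: "ts = m1 + s * x" unfolding ts_def theta_star_def m2 by (simp add: field_simps)
  have z1: "(ts - m1) / s = x" using s by (simp add: tsv)
  have z2: "(ts - m2) / s = - x" using s by (simp add: tsv m2)
  let ?P = "pi_plus m1 m2 s"
  have Pts: "?P ts = 1/2" unfolding pi_plus_def ts_def by simp
  have dP: "(?P has_real_derivative a) (at ts)"
  proof -
    have e: "?P = (\<lambda>th. exp ((th - ts) * (m2 - m1) / s\<^sup>2) / (1 + exp ((th - ts) * (m2 - m1) / s\<^sup>2)))"
      unfolding pi_plus_def ts_def Let_def by (rule ext) simp
    show ?thesis unfolding e
      using s by (auto intro!: derivative_eq_intros simp: a_def x_def power2_eq_square field_simps add_pos_pos)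
  qed
  have Phim: "Phi (- x) = 1 - Phi x" by (rule Phi_neg)
  have phim: "phi (- x) = phi x" by (rule phi_even)
  define dML where "dML = a * (2 * Phi x - 1) + phi x / s"
  have dM: "(MLf m1 m2 s has_real_derivative dML) (at ts)"
  proof -
    have e: "MLf m1 m2 s = (\<lambda>th. ?P th * Phi ((th - m1) / s) + (1 - ?P th) * Phi ((th - m2) / s))"
      unfolding MLf_def ..
    show ?thesis unfolding e
      using s by (auto intro!: derivative_eq_intros dP simp: z1 z2 Pts Phim phim dML_def field_simps)
  qed
  have ML0: "MLf m1 m2 s ts = 1/2"
    unfolding MLf_def Pts z1 z2 Phim by (simp add: field_simps)
  define IL0 where "IL0 = (m1 * Phi x - s * phi x + m2 * (1 - Phi x) - s * phi x) / 2"
  have IL0v: "ILf m1 m2 s ts = IL0"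
    unfolding ILf_def Pts z1 z2 Phim phim IL0_def by (simp add: field_simps)
  have E0: "EEf m1 m2 s ts = ts"
  proof -
    have "EEf m1 m2 s ts = (m1 + m2) / 2" unfolding EEf_def Pts by (simp add: field_simps)
    thus ?thesis unfolding ts_def theta_star_def .
  qed
  define dIL where "dIL = a * (m1 * Phi x - m2 * (1 - Phi x)) + (m1 + s * x) * phi x / s"
  have dI: "(ILf m1 m2 s has_real_derivative dIL) (at ts)"
  proof -
    have e: "ILf m1 m2 s = (\<lambda>th. ?P th * (m1 * Phi ((th - m1) / s) - s * phi ((th - m1) / s))
     + (1 - ?P th) * (m2 * Phi ((th - m2) / s) - s * phi ((th - m2) / s)))"
      unfolding ILf_def ..
    show ?thesis unfolding e
      using s apply (auto intro!: derivative_eq_intros dP simp: z1 z2 Pts Phim phim dIL_def field_simps)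
      by (simp add: m2 field_simps)
  qed
  define dE where "dE = a * (m1 - m2)"
  have dEE: "(EEf m1 m2 s has_real_derivative dE) (at ts)"
  proof -
    have e: "EEf m1 m2 s = (\<lambda>th. ?P th * m1 + (1 - ?P th) * m2)"
      unfolding EEf_def ..
    show ?thesis unfolding e
      using s by (auto intro!: derivative_eq_intros dP simp: dE_def field_simps)
  qed
  have ge: "g m1 m2 s = (\<lambda>th. (ILf m1 m2 s th / MLf m1 m2 s th
     + (EEf m1 m2 s th - ILf m1 m2 s th) / (1 - MLf m1 m2 s th)) / 2)"
    using g_closed[OF s] by (intro ext) simp
  show "g m1 m2 s ts = ts"
    unfolding ge ML0 IL0v E0 by (simp add: field_simps)
  have "(g m1 m2 s has_real_derivative
     ((dIL * (1/2) - IL0 * dML) / (1/2)^2 + ((dE - dIL) * (1/2) + (ts - IL0) * dML) / (1/2)^2) / 2) (at ts)"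
    unfolding ge
    by (auto intro!: derivative_eq_intros dI dM dEE simp: ML0 IL0v E0 power2_eq_square field_simps)
  moreover have "((dIL * (1/2) - IL0 * dML) / (1/2)^2 + ((dE - dIL) * (1/2) + (ts - IL0) * dML) / (1/2)^2) / 2 = C x"
    unfolding C_def Phim dIL_def IL0_def dE_def dML_def a_def tsv m2
    using s by (simp add: field_simps power2_eq_square)
  ultimately show "(g m1 m2 s has_real_derivative C x) (at ts)" by simp
qed



lemma phi_pos: "phi u > 0"
  unfolding phi_def by (rule normal_density_pos) simp

lemma Phi_strict: "a < b \<Longrightarrow> Phi a < Phi b"
  by (rule DERIV_pos_imp_increasing) (use Phi_deriv phi_pos in blast)+

lemma Phi_nonneg: "Phi u \<ge> 0"
  unfolding Phi_def by simp

lemma Phi_pos: "Phi u > 0"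
  using Phi_strict[of "u - 1" u] Phi_nonneg[of "u - 1"] by simp

lemma Phi_lt1: "Phi u < 1"
  using Phi_pos[of "-u"] Phi_neg[of u] by simp

lemma phi_0: "phi 0 = 1 / sqrt (2 * pi)"
  by (simp add: phi_def std_normal_density_def)

lemma phi_alt: "phi u = phi 0 * exp (- u\<^sup>2 / 2)"
  by (simp add: phi_def std_normal_density_def)

lemma phi_le0: "phi u \<le> phi 0"
proof -
  have "exp (- (u\<^sup>2 / 2)) \<le> 1" by simp
  hence "exp (- (u\<^sup>2 / 2)) / sqrt (2 * pi) \<le> 1 / sqrt (2 * pi)"
    by (rule divide_right_mono) simp
  thus ?thesis unfolding phi_alt[of u] by (simp add: phi_0)
qed

lemma phi0_sq: "(phi 0)\<^sup>2 = 1 / (2 * pi)"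
  by (simp add: phi_0 power_divide)

lemma Phi_half_bound:
  assumes y: "y \<ge> 0" shows "Phi y - 1/2 \<le> phi 0 * y"
proof (cases "y = 0")
  case True thus ?thesis by (simp add: Phi_0)
next
  case False
  hence "0 < y" using y by simp
  from MVT2[OF this, of Phi phi] Phi_deriv obtain z where "Phi y - Phi 0 = (y - 0) * phi z" by blast
  moreover have "y * phi z \<le> y * phi 0" using y phi_le0 by (simp add: mult_left_mono)
  ultimately show ?thesis by (simp add: Phi_0 mult.commute)
qed

lemma Phi_ge_half: "y \<ge> 0 \<Longrightarrow> Phi y \<ge> 1/2"
  using Phi_strict[of 0 y] Phi_0 by (cases "y = 0") auto

lemma k_nonneg: "phi y - y * (1 - Phi y) \<ge> 0"
proof -
  have sn: "normal_density 0 1 = std_normal_density" ..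
  have i1: "integrable lborel (\<lambda>t. t * std_normal_density t)"
    using integrable_normal_moment_nz_1[of 1 0] by (simp add: mult.commute)
  have I1: "(\<integral>t. t * std_normal_density t \<partial>lborel) = 0"
    using integral_normal_moment_nz_1[of 1 0] by (simp add: mult.commute)
  have A1: "(\<integral>t. indicator {y<..} t * (t * std_normal_density t) \<partial>lborel) = phi y"
    using int_greaterThan[OF i1, of y] N1[of 1 y 0] I1 by simp
  have A0: "(\<integral>t. indicator {y<..} t * std_normal_density t \<partial>lborel) = 1 - Phi y"
    using int_greaterThan[OF int_snd, of y] N0[of 1 y 0] integral_snd by simp
  have j1: "integrable lborel (\<lambda>t. indicator {y<..} t * (t * std_normal_density t))"
    using integrable_mult_indicator[OF _ i1, of "{y<..}"] by simp
  have j0: "integrable lborel (\<lambda>t. indicator {y<..} t * std_normal_density t)"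
    using integrable_mult_indicator[OF _ int_snd, of "{y<..}"] by simp
  have "(\<integral>t. indicator {y<..} t * ((t - y) * std_normal_density t) \<partial>lborel)
      = (\<integral>t. indicator {y<..} t * (t * std_normal_density t) - y * (indicator {y<..} t * std_normal_density t) \<partial>lborel)"
    by (simp add: algebra_simps)
  also have "\<dots> = phi y - y * (1 - Phi y)"
    by (simp add: Bochner_Integration.integral_diff j1 j0 integrable_mult_right A1 A0)
  finally have eq: "(\<integral>t. indicator {y<..} t * ((t - y) * std_normal_density t) \<partial>lborel) = phi y - y * (1 - Phi y)" .
  have "0 \<le> (\<integral>t. indicator {y<..} t * ((t - y) * std_normal_density t) \<partial>lborel)"
    by (intro integral_nonneg_AE) (auto split: split_indicator)
  thus ?thesis using eq by simp
qed

lemma k_deriv: "((\<lambda>y. phi y - y * (1 - Phi y)) has_real_derivative - (1 - Phi y)) (at y)"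
  by (auto intro!: derivative_eq_intros phi_deriv Phi_deriv simp: algebra_simps)

lemma k_pos: "phi y - y * (1 - Phi y) > 0"
proof -
  have "phi (y + 1) - (y + 1) * (1 - Phi (y + 1)) < phi y - y * (1 - Phi y)"
    by (rule DERIV_neg_imp_decreasing[of y "y + 1"]) (use k_deriv Phi_lt1 in \<open>force+\<close>)
  thus ?thesis using k_nonneg[of "y + 1"] by linarith
qed



lemma mills_lower:
  assumes y: "y \<ge> 0"
  shows "phi y * y / (1 + y\<^sup>2) \<le> 1 - Phi y"
proof -
  define d where "d = (\<lambda>y. (1 - Phi y) - phi y * y / (1 + y\<^sup>2))"
  have dd: "(d has_real_derivative - 2 * phi z / (1 + z\<^sup>2)\<^sup>2) (at z)" for z
  proof -
    define q where "q = 1 + z\<^sup>2"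
    have q: "q > 0" unfolding q_def by (simp add: add_pos_nonneg)
    have w: "((\<lambda>z. z / (1 + z\<^sup>2)) has_real_derivative (1 - z\<^sup>2) / q\<^sup>2) (at z)"
      using q unfolding q_def by (auto intro!: derivative_eq_intros simp: field_simps power2_eq_square)
    have e: "d = (\<lambda>z. 1 - Phi z - phi z * (z / (1 + z\<^sup>2)))" unfolding d_def by auto
    have "(d has_real_derivative 0 - phi z - ((- z * phi z) * (z / q) + ((1 - z\<^sup>2) / q\<^sup>2) * phi z)) (at z)"
      unfolding e q_def
      by (intro DERIV_diff DERIV_mult phi_deriv Phi_deriv DERIV_const w[unfolded q_def])
    moreover have "0 - phi z - ((- z * phi z) * (z / q) + ((1 - z\<^sup>2) / q\<^sup>2) * phi z) = - 2 * phi z / q\<^sup>2"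
    proof -
      have z2: "z\<^sup>2 = q - 1" unfolding q_def by simp
      have "0 - phi z - ((- z * phi z) * (z / q) + ((1 - z\<^sup>2) / q\<^sup>2) * phi z)
          = phi z * (- 1 + z\<^sup>2 / q - (1 - z\<^sup>2) / q\<^sup>2)" by (simp add: field_simps power2_eq_square)
      also have "- 1 + z\<^sup>2 / q - (1 - z\<^sup>2) / q\<^sup>2 = - 2 / q\<^sup>2"
        unfolding z2 using q by (simp add: field_simps power2_eq_square)
      finally show ?thesis by simp
    qed
    ultimately show ?thesis unfolding q_def by simp
  qed
  have mono: "d z \<le> d y" if "y \<le> z" for z
  proof (rule DERIV_nonpos_imp_nonincreasing[OF that])
    fix t show "\<exists>D. (d has_real_derivative D) (at t) \<and> D \<le> 0"
      using dd[of t] phi_pos[of t] by (intro exI[of _ "- 2 * phi t / (1 + t\<^sup>2)\<^sup>2"]) auto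
  qed
  have lim1: "((\<lambda>z. 1 - Phi z) \<longlongrightarrow> 1 - 1) at_top"
    by (intro tendsto_diff tendsto_const Phi_top)
  have lim2: "((\<lambda>z. phi z * z / (1 + z\<^sup>2)) \<longlongrightarrow> 0) at_top"
  proof (rule tendsto_sandwich[where f="\<lambda>z. 0" and h="phi"])
    have pt: "(phi \<longlongrightarrow> 0) at_top" using phi_tendsto unfolding phi_def[abs_def] .
    show "(phi \<longlongrightarrow> 0) at_top" by (rule pt)
    show "((\<lambda>z. 0::real) \<longlongrightarrow> 0) at_top" by simp
    show "\<forall>\<^sub>F z in at_top. 0 \<le> phi z * z / (1 + z\<^sup>2)"
      using eventually_ge_at_top[of "0::real"] by eventually_elim (use phi_pos[THEN less_imp_le] in \<open>auto intro!: divide_nonneg_nonneg mult_nonneg_nonneg add_nonneg_nonneg\<close>)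
    show "\<forall>\<^sub>F z in at_top. phi z * z / (1 + z\<^sup>2) \<le> phi z"
      using eventually_ge_at_top[of "0::real"]
    proof eventually_elim
      case (elim z)
      have "z \<le> 1 + z\<^sup>2"
      proof (cases "z \<le> 1")
        case True thus ?thesis by (simp add: add_increasing2)
      next
        case False hence "z \<le> z\<^sup>2" by (simp add: power2_eq_square)
        thus ?thesis by simp
      qed
      hence "phi z * z \<le> phi z * (1 + z\<^sup>2)" using phi_pos[of z] by (simp add: mult_left_mono)
      moreover have "0 < 1 + z\<^sup>2" by (simp add: add_pos_nonneg)
      ultimately show ?case by (simp add: divide_le_eq)
    qed
  qed
  have "(d \<longlongrightarrow> (1 - 1) - 0) at_top" unfolding d_def by (intro tendsto_diff lim1 lim2)
  hence dl: "(d \<longlongrightarrow> 0) at_top" by simp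
  have "0 \<le> d y"
    by (rule tendsto_upperbound[OF dl _ trivial_limit_at_top_linorder])
       (use eventually_mono[OF eventually_ge_at_top[of y] mono] in auto)
  thus ?thesis unfolding d_def by simp
qed

lemma r_nonpos:
  assumes y: "y \<ge> 0"
  shows "phi y * (2 * Phi y - 1) \<le> 2 * y * Phi y * (1 - Phi y)"
proof -
  define P where "P = Phi y"
  define c where "c = phi 0"
  have c0: "c > 0" unfolding c_def by (rule phi_pos)
  have c2: "c\<^sup>2 = 1 / (2 * pi)" unfolding c_def by (rule phi0_sq)
  have Pb: "0 \<le> P - 1/2" "P - 1/2 \<le> c * y"
    using Phi_ge_half[OF y] Phi_half_bound[OF y] unfolding P_def c_def by auto
  have P1: "P < 1" unfolding P_def by (rule Phi_lt1)
  have fpos: "phi y > 0" by (rule phi_pos)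
  have pi3: "pi > 3" by (rule pi_gt3)
  show ?thesis
  proof (cases "y\<^sup>2 \<le> 7/10")
    case True
    define E where "E = exp (- y\<^sup>2 / 2)"
    have fE: "phi y = c * E" unfolding E_def c_def by (rule phi_alt)
    have Epos: "E > 0" unfolding E_def by simp
    have E1: "E * (1 + y\<^sup>2 / 2) \<le> 1"
    proof -
      have "1 + y\<^sup>2 / 2 \<le> exp (y\<^sup>2 / 2)" by (rule exp_ge_add_one_self)
      hence "E * (1 + y\<^sup>2 / 2) \<le> E * exp (y\<^sup>2 / 2)" using Epos by (simp add: mult_left_mono)
      also have "E * exp (y\<^sup>2 / 2) = 1" unfolding E_def by (simp add: exp_minus[symmetric] exp_add[symmetric])
      finally show ?thesis .
    qed
    have q: "1 \<le> (3/2 - y\<^sup>2) * (1 + y\<^sup>2 / 2)"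
    proof -
      have "0 \<le> y\<^sup>2" by simp
      have "(3/2 - y\<^sup>2) * (1 + y\<^sup>2 / 2) = 3/2 - y\<^sup>2 / 4 - (y\<^sup>2)\<^sup>2 / 2" by (simp add: algebra_simps power2_eq_square)
      moreover have "(y\<^sup>2)\<^sup>2 \<le> (7/10) * y\<^sup>2" using mult_right_mono[OF True \<open>0 \<le> y\<^sup>2\<close>] by (simp add: power2_eq_square[of "y\<^sup>2"])
      ultimately show ?thesis using True by simp
    qed
    have E2: "E \<le> pi / 2 - y\<^sup>2"
    proof -
      have pos: "0 < 1 + y\<^sup>2 / 2" by (simp add: add_pos_nonneg)
      have "E \<le> 1 / (1 + y\<^sup>2 / 2)" using E1 pos by (simp add: field_simps)
      also have "1 / (1 + y\<^sup>2 / 2) \<le> 3/2 - y\<^sup>2" using q pos by (simp add: field_simps)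
      also have "\<dots> \<le> pi / 2 - y\<^sup>2" using pi3 by simp
      finally show ?thesis .
    qed
    have L: "phi y * (2 * P - 1) \<le> c * E * (2 * c * y)"
      using Pb fE fpos by (simp add: mult_left_mono)
    have L2: "c * E * (2 * c * y) = y * E / pi" using c2 by (simp add: power2_eq_square field_simps)
    have R: "2 * y * (1/4 - c\<^sup>2 * y\<^sup>2) \<le> 2 * y * P * (1 - P)"
    proof -
      have "(P - 1/2)\<^sup>2 \<le> (c * y)\<^sup>2" using Pb by (intro power_mono) auto
      hence "1/4 - c\<^sup>2 * y\<^sup>2 \<le> P * (1 - P)" by (simp add: power2_eq_square algebra_simps)
      thus ?thesis using y by (simp add: mult_left_mono mult.assoc)
    qed
    have M: "y * E / pi \<le> 2 * y * (1/4 - c\<^sup>2 * y\<^sup>2)"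
    proof -
      have "y * E \<le> y * (pi / 2 - y\<^sup>2)" using E2 y by (simp add: mult_left_mono)
      hence "y * E / pi \<le> y * (pi / 2 - y\<^sup>2) / pi" using pi3 by (simp add: divide_right_mono)
      also have "\<dots> = 2 * y * (1/4 - c\<^sup>2 * y\<^sup>2)" using c2 pi3 by (simp add: field_simps)
      finally show ?thesis .
    qed
    show ?thesis unfolding P_def[symmetric] using L L2 M R by linarith
  next
    case False
    have u: "phi y * y / (1 + y\<^sup>2) \<le> 1 - P" unfolding P_def by (rule mills_lower[OF y])
    have cy: "2 * c \<le> y"
    proof -
      have "(2 * c)\<^sup>2 = 2 / pi" using c2 by (simp add: power2_eq_square field_simps)
      also have "\<dots> \<le> 7/10" using pi3 by (simp add: field_simps)
      also have "\<dots> \<le> y\<^sup>2" using False by simp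
      finally have "(2 * c)\<^sup>2 \<le> y\<^sup>2" .
      thus ?thesis using y by (rule power2_le_imp_le)
    qed
    have key: "2 * P - 1 \<le> y\<^sup>2"
    proof -
      have "2 * P - 1 \<le> 2 * c * y" using Pb by simp
      also have "\<dots> \<le> y * y" using cy y by (simp add: mult_right_mono)
      finally show ?thesis by (simp add: power2_eq_square)
    qed
    have qpos: "0 < 1 + y\<^sup>2" by (simp add: add_pos_nonneg)
    have "phi y * (2 * P - 1) * (1 + y\<^sup>2) \<le> 2 * y * P * (phi y * y)"
    proof -
      have "(2 * P - 1) * (1 + y\<^sup>2) \<le> 2 * y\<^sup>2 * P" using key by (simp add: algebra_simps)
      hence "phi y * ((2 * P - 1) * (1 + y\<^sup>2)) \<le> phi y * (2 * y\<^sup>2 * P)" using fpos by (simp add: mult_left_mono)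
      thus ?thesis by (simp add: power2_eq_square algebra_simps)
    qed
    hence "phi y * (2 * P - 1) \<le> 2 * y * P * (phi y * y / (1 + y\<^sup>2))"
      using qpos by (simp add: field_simps)
    also have "\<dots> \<le> 2 * y * P * (1 - P)"
      using u y Phi_pos[of y] unfolding P_def by (intro mult_left_mono) auto
    finally show ?thesis unfolding P_def .
  qed
qed



lemma C_alt: "C y = (2 * phi y + 2 * y * Phi y) * (2 * phi y - 2 * y * (1 - Phi y))"
  unfolding C_def Phi_neg ..

lemma C_formula: "C x = 4 * ((phi x)\<^sup>2 + phi x * x * (2 * Phi x - 1) - x\<^sup>2 * Phi x * (1 - Phi x))"
  unfolding C_alt by (simp add: algebra_simps power2_eq_square)

lemma C_pos: "y \<ge> 0 \<Longrightarrow> C y > 0"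
proof -
  assume y: "y \<ge> 0"
  have "2 * phi y + 2 * y * Phi y > 0"
    using phi_pos[of y] Phi_pos[of y] y by (simp add: add_pos_nonneg)
  moreover have "2 * phi y - 2 * y * (1 - Phi y) > 0" using k_pos[of y] by simp
  ultimately show ?thesis unfolding C_alt by simp
qed

lemma C_0: "C 0 = 2 / pi"
  unfolding C_alt using phi0_sq by (simp add: power2_eq_square field_simps)

lemma C_deriv: "(C has_real_derivative 4 * (phi y * (2 * Phi y - 1) - 2 * y * Phi y * (1 - Phi y))) (at y)"
proof -
  have e: "C = (\<lambda>y. (2 * phi y + 2 * y * Phi y) * (2 * phi y - 2 * y * (1 - Phi y)))"
    using C_alt by auto
  show ?thesis unfolding e
    by (auto intro!: derivative_eq_intros phi_deriv Phi_deriv simp: algebra_simps)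
qed

lemma C_le: "y \<ge> 0 \<Longrightarrow> C y \<le> 2 / pi"
proof -
  assume y: "y \<ge> 0"
  have "C y \<le> C 0"
  proof (rule DERIV_nonpos_imp_nonincreasing[OF y])
    fix t assume t: "0 \<le> t" "t \<le> y"
    show "\<exists>D. (C has_real_derivative D) (at t) \<and> D \<le> 0"
      using C_deriv[of t] r_nonpos[OF t(1)] by (intro exI[of _ "4 * (phi t * (2 * Phi t - 1) - 2 * t * Phi t * (1 - Phi t))"]) auto
  qed
  thus ?thesis using C_0 by simp
qed

lemma two_pi_lt1: "2 / pi < 1"
  using pi_gt3 by simp

lemma contraction:
  fixes f :: "real \<Rightarrow> real"
  assumes d: "(f has_real_derivative D) (at a)" and fa: "f a = a"
    and D: "\<bar>D\<bar> < c"
  shows "\<exists>\<delta>>0. \<forall>t. \<bar>t - a\<bar> < \<delta> \<longrightarrow> \<bar>f t - a\<bar> \<le> c * \<bar>t - a\<bar>"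
proof -
  have "((\<lambda>h. (f (a + h) - f a) / h) \<longlongrightarrow> D) (at 0)"
    using d by (simp add: DERIV_def)
  hence L: "\<forall>r>0. \<exists>s>0. \<forall>h. h \<noteq> 0 \<and> dist h 0 < s \<longrightarrow> dist ((f (a + h) - f a) / h) D < r"
    unfolding LIM_def .
  have "c - \<bar>D\<bar> > 0" using D by simp
  from L[rule_format, OF this]
  have "\<exists>s>0. \<forall>h. h \<noteq> 0 \<and> norm (h - 0) < s \<longrightarrow> norm ((f (a + h) - f a) / h - D) < c - \<bar>D\<bar>"
    by (simp add: dist_norm)
  then obtain s where s: "s > 0"
    and sH: "\<And>h. h \<noteq> 0 \<Longrightarrow> \<bar>h\<bar> < s \<Longrightarrow> \<bar>(f (a + h) - f a) / h - D\<bar> < c - \<bar>D\<bar>" by auto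
  show ?thesis
  proof (intro exI[of _ s] conjI allI impI s)
    fix t assume t: "\<bar>t - a\<bar> < s"
    show "\<bar>f t - a\<bar> \<le> c * \<bar>t - a\<bar>"
    proof (cases "t = a")
      case True thus ?thesis using fa by simp
    next
      case False
      define h where "h = t - a"
      have h0: "h \<noteq> 0" using False by (simp add: h_def)
      have "\<bar>(f (a + h) - a) / h - D\<bar> < c - \<bar>D\<bar>" using sH[OF h0] t fa by (simp add: h_def)
      moreover have "(f (a + h) - a) / h - D = ((f (a + h) - a) - D * h) / h"
        using h0 by (simp add: diff_divide_distrib)
      ultimately have "\<bar>(f (a + h) - a) - D * h\<bar> / \<bar>h\<bar> < c - \<bar>D\<bar>"
        by (simp only: abs_divide)
      hence "\<bar>(f (a + h) - a) - D * h\<bar> < (c - \<bar>D\<bar>) * \<bar>h\<bar>"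
        using h0 by (simp add: pos_divide_less_eq)
      hence "\<bar>f (a + h) - a\<bar> \<le> (c - \<bar>D\<bar>) * \<bar>h\<bar> + \<bar>D\<bar> * \<bar>h\<bar>"
      proof -
        have "\<bar>D * h\<bar> = \<bar>D\<bar> * \<bar>h\<bar>" by (rule abs_mult)
        moreover have "\<bar>f (a + h) - a\<bar> \<le> \<bar>(f (a + h) - a) - D * h\<bar> + \<bar>D * h\<bar>"
          by (rule abs_triangle_ineq[of "(f (a + h) - a) - D * h" "D * h", simplified])
        ultimately show ?thesis using \<open>\<bar>(f (a + h) - a) - D * h\<bar> < (c - \<bar>D\<bar>) * \<bar>h\<bar>\<close> by linarith
      qed
      thus ?thesis by (simp add: h_def algebra_simps)
    qed
  qed
qed

theorem proposition1:
  fixes mu1 mu2 sg :: real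
  assumes "mu1 < mu2" and "sg > 0"
  defines "ts \<equiv> theta_star mu1 mu2"
    and "x \<equiv> (mu2 - mu1) / (2 * sg)"
  shows "g mu1 mu2 sg ts = ts
    \<and> (g mu1 mu2 sg has_real_derivative C x) (at ts)
    \<and> C x = 4 * ((phi x)\<^sup>2 + phi x * x * (2 * Phi x - 1) - x\<^sup>2 * Phi x * (1 - Phi x))
    \<and> (\<forall>y::real. y \<ge> 0 \<longrightarrow> 0 < C y \<and> C y \<le> 2 / pi)
    \<and> C 0 = 2 / pi \<and> 2 / pi < 1
    \<and> (\<forall>c. 2 / pi < c \<and> c < 1 \<longrightarrow>
         (\<exists>\<delta>>0. \<forall>theta. \<bar>theta - ts\<bar> < \<delta> \<longrightarrow>
            \<bar>g mu1 mu2 sg theta - ts\<bar> \<le> c * \<bar>theta - ts\<bar>))"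
proof -
  have d: "(g mu1 mu2 sg has_real_derivative C x) (at ts)" and f: "g mu1 mu2 sg ts = ts"
    using deriv_at_ts[OF assms(1,2)] unfolding ts_def x_def by auto
  have x0: "x \<ge> 0" unfolding x_def using assms(1,2) by simp
  have Cx: "0 < C x" "C x \<le> 2 / pi" using C_pos[OF x0] C_le[OF x0] by auto
  show ?thesis
  proof (intro conjI allI impI d f C_formula C_0 two_pi_lt1)
    fix y :: real assume "y \<ge> 0" thus "0 < C y" "C y \<le> 2 / pi" using C_pos C_le by auto
  next
    fix c assume c: "2 / pi < c \<and> c < 1"
    have "\<bar>C x\<bar> < c" using Cx c by simp
    thus "\<exists>\<delta>>0. \<forall>theta. \<bar>theta - ts\<bar> < \<delta> \<longrightarrow> \<bar>g mu1 mu2 sg theta - ts\<bar> \<le> c * \<bar>theta - ts\<bar>"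
      by (rule contraction[OF d f])
  qed
qed


end
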